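(* Let $C$ be a complex scheme of even type and $p$ an odd prime. 1. If $\Lambda^-\not\equiv\Lambda^+\pmod p$, then $\mathfrak Z_{\vec c,p}$ has no edges, and each of its vertices is indexed by a region other than the outer region $R_1$. 2. If $\Lambda^-\equiv\Lambda^+\pmod p$, then: - $\mathfrak Z_{\vec c,p}$ contains $u_1,u_2,u_3$ and the edges $u_1u_2$ and $u_1u_3$; - $\mathfrak Z_{\vec c,p}$ contains $R_1$ and the edge $u_1R_1$ if and only if $\Pi^+_o-\Pi^-_o\equiv1\pmod p$ for every outer oval $o$; - $\mathfrak Z_{\vec c,p}$ contains no other edges, and its only other possible vertices are indexed by regions other than $R_1$.
   Context: A complex scheme $C$ in $\mathbb{R}P^2$ is a finite collection of disjoint smooth simple closed curves, up to isotopy, at most one of which is one-sided. The two-sided components are ovals, and $C$ carries a semi-orientation. $C$ has even type if it has no one-sided component; then an auxiliary oriented one-sided curve $J$ disjoint from the ovals is fixed. Numerical characteristics: - Regions are the components of $\mathbb{R}P^2\setminus(C\cup J)$, and the outer region $R_1$ is the one whose closure meets $J$. Outer ovals are those in the boundary of $R_1$. The parity $\mathrm{par}$ of a region or oval is the parity of the number of ovals crossed to reach $R_1$. - For an oval $o$ bounding a disk $D_o$ and $x\in\mathrm{int}D_o$, one has $[o]=\pm2[J]$ in $H_1(\mathbb{R}P^2\setminus\{x\})$; $o$ is negative if $[o]=2[J]$, positive otherwise, and $\epsilon(o)=\pm1$ accordingly. $\Lambda^\pm$ is the number of positive/negative ovals. - Two ovals form an injective pair if they bound an annulus. The pair is positive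 if their orientations are the boundary orientation of some orientation of the annulus, and negative otherwise. $\Pi^\pm_o$ is the number of ovals forming a positive/negative injective pair with $o$. $\Gamma=\Gamma(C)$ is the weighted tree with vertices $R$ (weight $2\chi(R)$) for each region, $o$ (weight $0$) for each oval, and $u_1,u_2,u_3$ (weights $1,2,2$). Its edges are $Ro$ for $o\subset\partial R$, and $u_1u_2$, $u_1u_3$, $u_1R_1$. In the even type case its arrows are one arrow at each oval $o$, of sign $(-1)^{\mathrm{par}(o)+1}\epsilon(o)$. $A_\Gamma$ has the weights on the diagonal and $1$ for adjacent vertices, $0$ otherwise. Derived quantities. - $\vec s$ has entry $\pm1$ at the tail of a $\pm$ arrow and $0$ elsewhere; $\vec c=-2\vec sA_\Gamma^{-1}$. - $\Gamma^+$ is obtained by converting arrows into edges and arrowheads into new weight-$0$ vertices, and $\vec c^{\,+}$ extends $\vec c$ by $\pm2$ (the arrow sign) at the new vertices. - $\mathfrak Z_{\vec c,p}$ is the subgraph of $\Gamma$ whose vertices are the $v\in v(\Gamma)$ with $\vec c_v\equiv0\pmod p$ that are not joined by an edge of $\Gamma^+$ to any $w$ with $\vec c^{\,+}_w\not\equiv0\pmod p$; its edges are the edges of $\Gamma$ among these vertices. *)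

theory Defs
  imports Complex_Main "HOL-Number_Theory.Cong"
begin

text \<open>Combinatorial encoding of a complex scheme of even type in RP^2.
  The ovals form a finite set Ovs; up x = Some q means that q is the oval
  immediately enclosing x (x lies in the region directly inside q),
  up x = None means x is an outer oval. eps x is the sign epsilon(x)
  (+1 positive, -1 negative) of x with respect to the fixed oriented J.\<close>

definition up_rel :: "'x set \<Rightarrow> ('x \<Rightarrow> 'x option) \<Rightarrow> ('x \<times> 'x) set" where
  "up_rel Ovs up = {(x, q). x \<in> Ovs \<and> up x = Some q}"

definition even_scheme :: "'x set \<Rightarrow> ('x \<Rightarrow> 'x option) \<Rightarrow> ('x \<Rightarrow> int) \<Rightarrow> bool" where
  "even_scheme Ovs up eps \<longleftrightarrow> finite Ovs
     \<and> (\<forall>x\<in>Ovs. \<forall>q. up x = Some q \<longrightarrow> q \<in> Ovs)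
     \<and> (\<forall>x\<in>Ovs. (x, x) \<notin> (up_rel Ovs up)\<^sup>+)
     \<and> (\<forall>x\<in>Ovs. eps x = 1 \<or> eps x = -1)"

definition encloses :: "'x set \<Rightarrow> ('x \<Rightarrow> 'x option) \<Rightarrow> 'x \<Rightarrow> 'x \<Rightarrow> bool" where
  "encloses Ovs up q x \<longleftrightarrow> (x, q) \<in> (up_rel Ovs up)\<^sup>+"

text \<open>parity of an oval: number of ovals crossed to reach R_1 (the enclosing ovals)\<close>
definition depth :: "'x set \<Rightarrow> ('x \<Rightarrow> 'x option) \<Rightarrow> 'x \<Rightarrow> nat" where
  "depth Ovs up x = card {q \<in> Ovs. encloses Ovs up q x}"

definition outer_ovals :: "'x set \<Rightarrow> ('x \<Rightarrow> 'x option) \<Rightarrow> 'x set" where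
  "outer_ovals Ovs up = {x \<in> Ovs. up x = None}"

definition children :: "'x set \<Rightarrow> ('x \<Rightarrow> 'x option) \<Rightarrow> 'x \<Rightarrow> 'x set" where
  "children Ovs up q = {x \<in> Ovs. up x = Some q}"

definition Lambda_plus :: "'x set \<Rightarrow> ('x \<Rightarrow> int) \<Rightarrow> nat" where
  "Lambda_plus Ovs eps = card {x \<in> Ovs. eps x = 1}"

definition Lambda_minus :: "'x set \<Rightarrow> ('x \<Rightarrow> int) \<Rightarrow> nat" where
  "Lambda_minus Ovs eps = card {x \<in> Ovs. eps x = -1}"

text \<open>Orienting the annulus between
  nested ovals x, x', the pair is positive iff their orientations are of opposite
  type w.r.t. their disks, i.e. iff eps x differs from eps x'.\<close>
definition injective_pair :: "'x set \<Rightarrow> ('x \<Rightarrow> 'x option) \<Rightarrow> 'x \<Rightarrow> 'x \<Rightarrow> bool" where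
  "injective_pair Ovs up x x' \<longleftrightarrow> x \<in> Ovs \<and> x' \<in> Ovs \<and> (encloses Ovs up x x' \<or> encloses Ovs up x' x)"

definition Pi_plus :: "'x set \<Rightarrow> ('x \<Rightarrow> 'x option) \<Rightarrow> ('x \<Rightarrow> int) \<Rightarrow> 'x \<Rightarrow> nat" where
  "Pi_plus Ovs up eps x = card {x' \<in> Ovs. injective_pair Ovs up x x' \<and> eps x' \<noteq> eps x}"

definition Pi_minus :: "'x set \<Rightarrow> ('x \<Rightarrow> 'x option) \<Rightarrow> ('x \<Rightarrow> int) \<Rightarrow> 'x \<Rightarrow> nat" where
  "Pi_minus Ovs up eps x = card {x' \<in> Ovs. injective_pair Ovs up x x' \<and> eps x' = eps x}"

text \<open>Vertices of Gamma^+: u1,u2,u3, the outer region R_1, the region Reg x lying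
  directly inside the oval x, the oval vertex Ov x, and the arrowhead Head x of
  the arrow at x (only in Gamma^+).\<close>
datatype 'x vtx = U1 | U2 | U3 | ROut | Reg 'x | Ov 'x | Head 'x

definition outside_region :: "('x \<Rightarrow> 'x option) \<Rightarrow> 'x \<Rightarrow> 'x vtx" where
  "outside_region up x = (case up x of None \<Rightarrow> ROut | Some q \<Rightarrow> Reg q)"

definition Gverts :: "'x set \<Rightarrow> 'x vtx set" where
  "Gverts Ovs = {U1, U2, U3, ROut} \<union> Reg ` Ovs \<union> Ov ` Ovs"

definition Gedges :: "'x set \<Rightarrow> ('x \<Rightarrow> 'x option) \<Rightarrow> 'x vtx set set" where
  "Gedges Ovs up = {{U1, U2}, {U1, U3}, {U1, ROut}}
     \<union> (\<lambda>x. {Ov x, Reg x}) ` Ovs \<union> (\<lambda>x. {Ov x, outside_region up x}) ` Ovs"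

definition Gplus_edges :: "'x set \<Rightarrow> ('x \<Rightarrow> 'x option) \<Rightarrow> 'x vtx set set" where
  "Gplus_edges Ovs up = Gedges Ovs up \<union> (\<lambda>x. {Ov x, Head x}) ` Ovs"

text \<open>Euler characteristics: R_1 is a disk (RP^2 minus J) with the outer disks removed,
  Reg x is the disk of x with the disks of its children removed.\<close>
definition weight :: "'x set \<Rightarrow> ('x \<Rightarrow> 'x option) \<Rightarrow> 'x vtx \<Rightarrow> int" where
  "weight Ovs up v = (case v of
       U1 \<Rightarrow> 1 | U2 \<Rightarrow> 2 | U3 \<Rightarrow> 2
     | ROut \<Rightarrow> 2 * (1 - int (card (outer_ovals Ovs up)))
     | Reg x \<Rightarrow> 2 * (1 - int (card (children Ovs up x)))
     | Ov x \<Rightarrow> 0 | Head x \<Rightarrow> 0)"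

definition A_Gamma :: "'x set \<Rightarrow> ('x \<Rightarrow> 'x option) \<Rightarrow> 'x vtx \<Rightarrow> 'x vtx \<Rightarrow> int" where
  "A_Gamma Ovs up v w = (if v = w then weight Ovs up v
                       else if {v, w} \<in> Gedges Ovs up then 1 else 0)"

definition arrow_sign :: "'x set \<Rightarrow> ('x \<Rightarrow> 'x option) \<Rightarrow> ('x \<Rightarrow> int) \<Rightarrow> 'x \<Rightarrow> int" where
  "arrow_sign Ovs up eps x = (-1) ^ (depth Ovs up x + 1) * eps x"

definition s_vec :: "'x set \<Rightarrow> ('x \<Rightarrow> 'x option) \<Rightarrow> ('x \<Rightarrow> int) \<Rightarrow> 'x vtx \<Rightarrow> int" where
  "s_vec Ovs up eps v = (case v of Ov x \<Rightarrow> arrow_sign Ovs up eps x | _ \<Rightarrow> 0)"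

text \<open>c = -2 s A^{-1}, i.e. the unique vector (supported on the vertices of Gamma)
  with c A = -2 s.\<close>
definition c_vec :: "'x set \<Rightarrow> ('x \<Rightarrow> 'x option) \<Rightarrow> ('x \<Rightarrow> int) \<Rightarrow> 'x vtx \<Rightarrow> rat" where
  "c_vec Ovs up eps = (THE c. (\<forall>w\<in>Gverts Ovs.
        (\<Sum>v\<in>Gverts Ovs. c v * of_int (A_Gamma Ovs up v w)) = -2 * of_int (s_vec Ovs up eps w))
      \<and> (\<forall>v. v \<notin> Gverts Ovs \<longrightarrow> c v = 0))"

definition c_plus :: "'x set \<Rightarrow> ('x \<Rightarrow> 'x option) \<Rightarrow> ('x \<Rightarrow> int) \<Rightarrow> 'x vtx \<Rightarrow> rat" where
  "c_plus Ovs up eps v = (case v of Head x \<Rightarrow> of_int (2 * arrow_sign Ovs up eps x)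
                                 | _ \<Rightarrow> c_vec Ovs up eps v)"

definition rat_cong0 :: "nat \<Rightarrow> rat \<Rightarrow> bool" where
  "rat_cong0 p q \<longleftrightarrow> (\<exists>a b :: int. b \<noteq> 0 \<and> \<not> int p dvd b \<and> int p dvd a
                                   \<and> q = of_int a / of_int b)"

definition Z_verts :: "nat \<Rightarrow> 'x set \<Rightarrow> ('x \<Rightarrow> 'x option) \<Rightarrow> ('x \<Rightarrow> int) \<Rightarrow> 'x vtx set" where
  "Z_verts p Ovs up eps = {v \<in> Gverts Ovs. rat_cong0 p (c_vec Ovs up eps v)
       \<and> (\<forall>w. {v, w} \<in> Gplus_edges Ovs up \<longrightarrow> rat_cong0 p (c_plus Ovs up eps w))}"

definition Z_edges :: "nat \<Rightarrow> 'x set \<Rightarrow> ('x \<Rightarrow> 'x option) \<Rightarrow> ('x \<Rightarrow> int) \<Rightarrow> 'x vtx set set" where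
  "Z_edges p Ovs up eps = {e \<in> Gedges Ovs up. e \<subseteq> Z_verts p Ovs up eps}"

end

theory Submission
  imports Defs "HOL-Computational_Algebra.Primes"
begin

locale scheme =
  fixes Ovs :: "'x set" and up :: "'x \<Rightarrow> 'x option" and eps :: "'x \<Rightarrow> int"
  assumes es: "even_scheme Ovs up eps"
begin

abbreviation "R \<equiv> up_rel Ovs up"

lemma fin: "finite Ovs" and up_in: "x \<in> Ovs \<Longrightarrow> up x = Some q \<Longrightarrow> q \<in> Ovs"
  and acyc: "x \<in> Ovs \<Longrightarrow> (x,x) \<notin> R\<^sup>+" and eps_pm: "x \<in> Ovs \<Longrightarrow> eps x = 1 \<or> eps x = -1"
  using es unfolding even_scheme_def by auto

lemma R_iff: "(x,q) \<in> R \<longleftrightarrow> x \<in> Ovs \<and> up x = Some q" by (simp add: up_rel_def)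

lemma R_sub: "R \<subseteq> Ovs \<times> Ovs" using up_in by (auto simp: up_rel_def)
lemma finR: "finite R" using R_sub fin by (meson finite_SigmaI finite_subset)

lemma acyclicR: "acyclic R"
  unfolding acyclic_def
proof
  fix x show "(x,x) \<notin> R\<^sup>+"
  proof
    assume h: "(x,x) \<in> R\<^sup>+"
    then obtain z where "(x,z) \<in> R" using tranclD by metis
    then have "x \<in> Ovs" by (simp add: R_iff)
    with acyc h show False by blast
  qed
qed

lemma wfR: "wf R" using finR acyclicR finite_acyclic_wf by blast
lemma wfRc: "wf (R\<inverse>)" using finR acyclicR finite_acyclic_wf_converse by blast

lemma func: "(x,a) \<in> R \<Longrightarrow> (x,b) \<in> R \<Longrightarrow> a = b" by (simp add: R_iff)

lemma chain: "(z,a) \<in> R\<^sup>* \<Longrightarrow> (z,b) \<in> R\<^sup>* \<Longrightarrow> (a,b) \<in> R\<^sup>* \<or> (b,a) \<in> R\<^sup>*"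
proof (induction rule: rtrancl_induct)
  case base then show ?case by simp
next
  case (step a' a)
  from step.IH[OF step.prems] show ?case
  proof
    assume "(a',b) \<in> R\<^sup>*"
    then show ?thesis
    proof (cases rule: converse_rtranclE)
      case base then show ?thesis using step.hyps(2) by blast
    next
      case (step m)
      then have "m = a" using func \<open>(a',a) \<in> R\<close> by blast
      then show ?thesis using step by simp
    qed
  next
    assume "(b,a') \<in> R\<^sup>*"
    then show ?thesis using step.hyps(2) by (meson rtrancl.rtrancl_into_rtrancl)
  qed
qed

lemma disj1: "y1 \<noteq> y2 \<Longrightarrow> up y1 = up y2 \<Longrightarrow> y2 \<in> Ovs \<Longrightarrow> (y1,y2) \<in> R\<^sup>* \<Longrightarrow> False"
proof (erule converse_rtranclE)
  fix m assume a: "y1 \<noteq> y2" "up y1 = up y2" "y2 \<in> Ovs" "(y1, m) \<in> R" "(m, y2) \<in> R\<^sup>*"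
  then have "(y2,m) \<in> R" by (simp add: R_iff)
  then have "(m,m) \<in> R\<^sup>+" using a(5) by (meson rtrancl_into_trancl1)
  moreover have "m \<in> Ovs" using a(4) R_sub by auto
  ultimately show False using acyc by blast
qed simp

lemma disj: "y1 \<noteq> y2 \<Longrightarrow> up y1 = up y2 \<Longrightarrow> y1 \<in> Ovs \<Longrightarrow> y2 \<in> Ovs
   \<Longrightarrow> (z,y1) \<in> R\<^sup>* \<Longrightarrow> (z,y2) \<in> R\<^sup>* \<Longrightarrow> False"
  using chain disj1 by metis

definition anc where "anc x = {q \<in> Ovs. encloses Ovs up q x}"
definition sub where "sub x = {z \<in> Ovs. (z,x) \<in> R\<^sup>*}"
definition A where "A x = (\<Sum>q\<in>anc x. eps q)"
definition W where "W x = (\<Sum>z\<in>sub x. eps z)"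
definition T where "T = (\<Sum>z\<in>Ovs. eps z)"

lemma anc_fin: "finite (anc x)" using fin by (simp add: anc_def)
lemma sub_fin: "finite (sub x)" using fin by (simp add: sub_def)

lemma anc_child: assumes "y \<in> Ovs" "up y = Some x"
  shows "anc y = insert x (anc x)" "x \<notin> anc x"
proof -
  have yx: "(y,x) \<in> R" using assms by (simp add: R_iff)
  have xO: "x \<in> Ovs" using assms up_in by blast
  show "x \<notin> anc x" using acyc xO by (simp add: anc_def encloses_def)
  show "anc y = insert x (anc x)"
  proof (rule set_eqI)
    fix q
    have "(y,q) \<in> R\<^sup>+ \<longleftrightarrow> q = x \<or> (x,q) \<in> R\<^sup>+"
    proof
      assume "(y,q) \<in> R\<^sup>+"
      then show "q = x \<or> (x,q) \<in> R\<^sup>+"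
        by (cases rule: converse_tranclE) (use func yx in blast)+
    next
      assume "q = x \<or> (x,q) \<in> R\<^sup>+"
      then show "(y,q) \<in> R\<^sup>+" using yx by (meson r_into_trancl' trancl_into_trancl2)
    qed
    then show "q \<in> anc y \<longleftrightarrow> q \<in> insert x (anc x)" using xO by (auto simp: anc_def encloses_def)
  qed
qed

lemma anc_outer: "up y = None \<Longrightarrow> anc y = {}"
  unfolding anc_def encloses_def by (auto dest!: tranclD simp: R_iff)

lemma depth_child: "y \<in> Ovs \<Longrightarrow> up y = Some x \<Longrightarrow> depth Ovs up y = Suc (depth Ovs up x)"
  using anc_child[of y x] anc_fin by (simp add: depth_def anc_def[symmetric])

lemma A_child: "y \<in> Ovs \<Longrightarrow> up y = Some x \<Longrightarrow> A y = eps x + A x"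
  using anc_child[of y x] anc_fin by (simp add: A_def)

lemma depth_outer: "up y = None \<Longrightarrow> depth Ovs up y = 0"
  using anc_outer[of y] by (simp add: depth_def anc_def[symmetric])
lemma A_outer: "up y = None \<Longrightarrow> A y = 0"
  using anc_outer[of y] by (simp add: A_def)

lemma sub_child: assumes "x \<in> Ovs"
  shows "sub x = insert x (\<Union>y\<in>children Ovs up x. sub y)" "x \<notin> (\<Union>y\<in>children Ovs up x. sub y)"
proof -
  show "sub x = insert x (\<Union>y\<in>children Ovs up x. sub y)"
  proof (rule set_eqI)
    fix z
    have "(z,x) \<in> R\<^sup>* \<longleftrightarrow> z = x \<or> (\<exists>y. (y,x) \<in> R \<and> (z,y) \<in> R\<^sup>*)"
      by (meson rtranclE rtrancl.rtrancl_into_rtrancl rtrancl.rtrancl_refl)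
    then show "z \<in> sub x \<longleftrightarrow> z \<in> insert x (\<Union>y\<in>children Ovs up x. sub y)"
      using assms by (auto simp: sub_def children_def R_iff)
  qed
  show "x \<notin> (\<Union>y\<in>children Ovs up x. sub y)"
  proof
    assume "x \<in> (\<Union>y\<in>children Ovs up x. sub y)"
    then obtain y where "(y,x) \<in> R" "(x,y) \<in> R\<^sup>*" by (auto simp: sub_def children_def R_iff)
    then have "(x,x) \<in> R\<^sup>+" by (meson rtrancl_into_trancl1)
    with acyc assms show False by blast
  qed
qed

lemma sub_disj: "y1 \<in> Ovs \<Longrightarrow> y2 \<in> Ovs \<Longrightarrow> y1 \<noteq> y2 \<Longrightarrow> up y1 = up y2 \<Longrightarrow> sub y1 \<inter> sub y2 = {}"
  using disj by (auto simp: sub_def)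

lemma W_child: assumes "x \<in> Ovs"
  shows "W x = eps x + (\<Sum>y\<in>children Ovs up x. W y)"
proof -
  have fc: "finite (children Ovs up x)" using fin by (simp add: children_def)
  have "W x = eps x + sum eps (\<Union>y\<in>children Ovs up x. sub y)"
    unfolding W_def sub_child(1)[OF assms]
    by (rule sum.insert) (use sub_child(2)[OF assms] fc sub_fin in auto)
  also have "sum eps (\<Union>y\<in>children Ovs up x. sub y) = (\<Sum>y\<in>children Ovs up x. W y)"
    unfolding W_def
    by (rule sum.UNION_disjoint) (use fc sub_fin sub_disj in \<open>auto simp: children_def\<close>)
  finally show ?thesis .
qed

lemma cover: "z \<in> Ovs \<Longrightarrow> \<exists>y\<in>outer_ovals Ovs up. (z,y) \<in> R\<^sup>*"
proof (induction z rule: wf_induct[OF wfRc])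
  case (1 z)
  show ?case
  proof (cases "up z")
    case None then show ?thesis using 1 by (auto simp: outer_ovals_def)
  next
    case (Some q)
    then have zq: "(z,q) \<in> R" using 1 by (simp add: R_iff)
    then obtain y where "y \<in> outer_ovals Ovs up" "(q,y) \<in> R\<^sup>*"
      using 1 up_in Some by blast
    then show ?thesis using zq by (meson converse_rtrancl_into_rtrancl)
  qed
qed

lemma T_outer: "T = (\<Sum>y\<in>outer_ovals Ovs up. W y)"
proof -
  have fo: "finite (outer_ovals Ovs up)" using fin by (simp add: outer_ovals_def)
  have "Ovs = (\<Union>y\<in>outer_ovals Ovs up. sub y)"
    using cover by (auto simp: sub_def)
  then have "T = sum eps (\<Union>y\<in>outer_ovals Ovs up. sub y)" by (simp add: T_def)
  also have "\<dots> = (\<Sum>y\<in>outer_ovals Ovs up. W y)"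
    unfolding W_def
    by (rule sum.UNION_disjoint) (use fo sub_fin sub_disj in \<open>auto simp: outer_ovals_def\<close>)
  finally show ?thesis .
qed


end

context scheme begin

lemma finG: "finite (Gverts Ovs)" using fin by (simp add: Gverts_def)

definition L :: "('x vtx \<Rightarrow> rat) \<Rightarrow> 'x vtx \<Rightarrow> rat" where
  "L c w = (\<Sum>v\<in>Gverts Ovs. c v * of_int (A_Gamma Ovs up v w))"
definition N where "N w = {v\<in>Gverts Ovs. v \<noteq> w \<and> {v,w} \<in> Gedges Ovs up}"

lemma eq_at: assumes "w \<in> Gverts Ovs"
  shows "L c w = of_int (weight Ovs up w) * c w + sum c (N w)"
proof -
  have "L c w = c w * of_int (weight Ovs up w) + (\<Sum>v\<in>Gverts Ovs - {w}. c v * of_int (A_Gamma Ovs up v w))"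
    unfolding L_def by (subst sum.remove[OF finG assms]) (simp add: A_Gamma_def)
  also have "(\<Sum>v\<in>Gverts Ovs - {w}. c v * of_int (A_Gamma Ovs up v w))
      = (\<Sum>v\<in>Gverts Ovs - {w}. if {v,w} \<in> Gedges Ovs up then c v else 0)"
    by (rule sum.cong) (auto simp: A_Gamma_def)
  also have "\<dots> = sum c (N w)"
    unfolding N_def by (subst sum.inter_filter[symmetric]) (use finG in auto)
  finally show ?thesis by simp
qed

lemma up_ne: "x \<in> Ovs \<Longrightarrow> up x \<noteq> Some x"
  using acyc[of x] by (auto simp: R_iff)

lemma edge_iff: "{v,w} \<in> Gedges Ovs up \<longleftrightarrow> {v,w} = {U1,U2} \<or> {v,w} = {U1,U3} \<or> {v,w} = {U1,ROut}
   \<or> (\<exists>x\<in>Ovs. {v,w} = {Ov x, Reg x}) \<or> (\<exists>x\<in>Ovs. {v,w} = {Ov x, outside_region up x})"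
  by (simp only: Gedges_def Un_iff image_iff insert_iff empty_iff simp_thms disj_assoc)

lemma N_U1: "N U1 = {U2, U3, ROut}"
  unfolding N_def edge_iff by (auto simp: Gverts_def doubleton_eq_iff outside_region_def split: option.splits)

lemma N_U2: "N U2 = {U1}"
  unfolding N_def edge_iff by (auto simp: Gverts_def doubleton_eq_iff outside_region_def split: option.splits)
lemma N_U3: "N U3 = {U1}"
  unfolding N_def edge_iff by (auto simp: Gverts_def doubleton_eq_iff outside_region_def split: option.splits)
lemma N_ROut: "N ROut = insert U1 (Ov ` outer_ovals Ovs up)"
  unfolding N_def edge_iff by (auto simp: Gverts_def doubleton_eq_iff outside_region_def outer_ovals_def split: option.splits)
lemma N_Reg: "x \<in> Ovs \<Longrightarrow> N (Reg x) = insert (Ov x) (Ov ` children Ovs up x)"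
  unfolding N_def edge_iff by (auto simp: Gverts_def doubleton_eq_iff outside_region_def children_def split: option.splits)
lemma N_Ov: "x \<in> Ovs \<Longrightarrow> N (Ov x) = {Reg x, outside_region up x}"
  using up_in[of x] up_ne[of x]
  unfolding N_def edge_iff
  apply (cases "up x")
   apply (auto simp: Gverts_def doubleton_eq_iff outside_region_def split: option.splits)
  by (drule bspec[of _ _ x]) auto

lemma G_U[simp]: "U1 \<in> Gverts Ovs" "U2 \<in> Gverts Ovs" "U3 \<in> Gverts Ovs" "ROut \<in> Gverts Ovs"
  by (auto simp: Gverts_def)
lemma G_RO[simp]: "Reg x \<in> Gverts Ovs \<longleftrightarrow> x \<in> Ovs" "Ov x \<in> Gverts Ovs \<longleftrightarrow> x \<in> Ovs" "Head x \<notin> Gverts Ovs"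
  by (auto simp: Gverts_def)
lemma G_cases: "w \<in> Gverts Ovs \<Longrightarrow> w = U1 \<or> w = U2 \<or> w = U3 \<or> w = ROut \<or> (\<exists>x\<in>Ovs. w = Reg x) \<or> (\<exists>x\<in>Ovs. w = Ov x)"
  by (auto simp: Gverts_def)

lemma L_U1: "L c U1 = c U1 + c U2 + c U3 + c ROut"
  by (simp add: eq_at N_U1 weight_def)
lemma L_U2: "L c U2 = 2 * c U2 + c U1"
  by (simp add: eq_at N_U2 weight_def)
lemma L_U3: "L c U3 = 2 * c U3 + c U1"
  by (simp add: eq_at N_U3 weight_def)
lemma L_ROut: "L c ROut = of_int (weight Ovs up ROut) * c ROut + c U1 + (\<Sum>y\<in>outer_ovals Ovs up. c (Ov y))"
proof -
  have fo: "finite (outer_ovals Ovs up)" using fin by (simp add: outer_ovals_def)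
  have "sum c (insert U1 (Ov ` outer_ovals Ovs up)) = c U1 + sum c (Ov ` outer_ovals Ovs up)"
    by (rule sum.insert) (use fo in auto)
  moreover have "sum c (Ov ` outer_ovals Ovs up) = (\<Sum>y\<in>outer_ovals Ovs up. c (Ov y))"
    by (subst sum.reindex) (auto simp: inj_on_def)
  ultimately show ?thesis by (simp add: eq_at N_ROut add.assoc)
qed
lemma L_Reg: assumes "x \<in> Ovs"
  shows "L c (Reg x) = of_int (2 * (1 - int (card (children Ovs up x)))) * c (Reg x) + c (Ov x)
     + (\<Sum>y\<in>children Ovs up x. c (Ov y))"
proof -
  have fo: "finite (children Ovs up x)" using fin by (simp add: children_def)
  have "x \<notin> children Ovs up x" using up_ne assms by (simp add: children_def)
  then have "sum c (insert (Ov x) (Ov ` children Ovs up x)) = c (Ov x) + sum c (Ov ` children Ovs up x)"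
    by (intro sum.insert) (use fo in auto)
  moreover have "sum c (Ov ` children Ovs up x) = (\<Sum>y\<in>children Ovs up x. c (Ov y))"
    by (subst sum.reindex) (auto simp: inj_on_def)
  ultimately show ?thesis using assms by (simp add: eq_at N_Reg add.assoc weight_def)
qed
lemma L_Ov: assumes "x \<in> Ovs" shows "L c (Ov x) = c (Reg x) + c (outside_region up x)"
proof -
  have "outside_region up x \<noteq> Reg x" using up_ne assms by (auto simp: outside_region_def split: option.splits)
  then show ?thesis using assms by (simp add: eq_at N_Ov weight_def)
qed

definition sol where "sol c \<longleftrightarrow> (\<forall>w\<in>Gverts Ovs. L c w = -2 * of_int (s_vec Ovs up eps w)) \<and> (\<forall>v. v \<notin> Gverts Ovs \<longrightarrow> c v = 0)"

definition c0 :: "'x vtx \<Rightarrow> rat" where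
  "c0 v = (case v of U1 \<Rightarrow> of_int (4*T) | U2 \<Rightarrow> of_int (-2*T) | U3 \<Rightarrow> of_int (-2*T) | ROut \<Rightarrow> 0
     | Reg x \<Rightarrow> if x \<in> Ovs then of_int (2*(-1)^depth Ovs up x*(A x + eps x)) else 0
     | Ov x \<Rightarrow> if x \<in> Ovs then of_int (4*(-1)^(depth Ovs up x+1)*(A x + W x)) else 0
     | Head x \<Rightarrow> 0)"

lemma sol_c0: "sol c0"
  unfolding sol_def
proof (intro conjI ballI allI impI)
  fix v assume "v \<notin> Gverts Ovs" then show "c0 v = 0"
    by (cases v) (auto simp: c0_def Gverts_def)
next
  fix w assume "w \<in> Gverts Ovs"
  then consider "w = U1" | "w = U2" | "w = U3" | "w = ROut" | x where "x \<in> Ovs" "w = Reg x"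
     | x where "x \<in> Ovs" "w = Ov x" using G_cases by blast
  then show "L c0 w = -2 * of_int (s_vec Ovs up eps w)"
  proof cases
    case 4
    have "(\<Sum>y\<in>outer_ovals Ovs up. c0 (Ov y)) = of_int (\<Sum>y\<in>outer_ovals Ovs up. -4 * W y)"
      unfolding of_int_sum
      by (rule sum.cong) (auto simp: c0_def outer_ovals_def depth_outer A_outer)
    also have "\<dots> = of_int (-4 * T)" by (simp add: T_outer sum_distrib_left)
    finally show ?thesis using 4 by (simp add: L_ROut s_vec_def c0_def)
  next
    case 5
    let ?d = "depth Ovs up x" and ?C = "children Ovs up x"
    have "(\<Sum>y\<in>?C. c0 (Ov y)) = of_int (\<Sum>y\<in>?C. 4*(-1)^?d*(eps x + A x + W y))"
      unfolding of_int_sum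
      by (rule sum.cong) (auto simp: c0_def children_def depth_child A_child)
    also have "(\<Sum>y\<in>?C. 4*(-1)^?d*(eps x + A x + W y)) = 4*(-1)^?d*(int (card ?C) * (eps x + A x) + (W x - eps x))"
      using W_child[OF 5(1)] by (simp add: sum_distrib_left[symmetric] sum.distrib)
    finally have "(\<Sum>y\<in>?C. c0 (Ov y)) = of_int (4*(-1)^?d*(int (card ?C) * (eps x + A x) + (W x - eps x)))" .
    then show ?thesis using 5
      by (simp add: L_Reg s_vec_def c0_def) (simp add: algebra_simps)
  next
    case 6
    show ?thesis
    proof (cases "up x")
      case None then show ?thesis using 6
        by (simp add: L_Ov s_vec_def c0_def outside_region_def depth_outer A_outer arrow_sign_def)
    next
      case (Some q)
      then have "q \<in> Ovs" using up_in 6 by blast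
      then show ?thesis using 6 Some
        by (simp add: L_Ov s_vec_def c0_def outside_region_def depth_child A_child arrow_sign_def) (simp add: algebra_simps)
    qed
  qed (simp_all add: L_U1 L_U2 L_U3 s_vec_def c0_def)
qed

lemma hom_zero: assumes h: "\<forall>w\<in>Gverts Ovs. L d w = 0" and z: "\<forall>v. v \<notin> Gverts Ovs \<longrightarrow> d v = 0"
  shows "d v = 0"
proof -
  have u1: "d U1 + d U2 + d U3 + d ROut = 0" using h L_U1[of d] by simp
  have u2: "2 * d U2 + d U1 = 0" using h L_U2[of d] by simp
  have u3: "2 * d U3 + d U1 = 0" using h L_U3[of d] by simp
  have dR: "d ROut = 0" using u1 u2 u3 by linarith
  have reg: "x \<in> Ovs \<longrightarrow> d (Reg x) = 0" for x
  proof (induction x rule: wf_induct[OF wfRc])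
    case (1 x)
    show ?case
    proof
      assume xO: "x \<in> Ovs"
      have e: "d (Reg x) + d (outside_region up x) = 0" using h L_Ov[OF xO, of d] xO by simp
      show "d (Reg x) = 0"
      proof (cases "up x")
        case None then show ?thesis using e dR by (simp add: outside_region_def)
      next
        case (Some q)
        then have "(q,x) \<in> R\<inverse>" "q \<in> Ovs" using xO up_in by (auto simp: R_iff)
        then have "d (Reg q) = 0" using 1 by blast
        then show ?thesis using e Some by (simp add: outside_region_def)
      qed
    qed
  qed
  have ov: "x \<in> Ovs \<longrightarrow> d (Ov x) = 0" for x
  proof (induction x rule: wf_induct[OF wfR])
    case (1 x)
    show ?case
    proof
      assume xO: "x \<in> Ovs"
      have "(\<Sum>y\<in>children Ovs up x. d (Ov y)) = 0"
        by (rule sum.neutral) (use 1 in \<open>auto simp: children_def R_iff\<close>)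
      then show "d (Ov x) = 0" using h L_Reg[OF xO, of d] xO reg by simp
    qed
  qed
  have "(\<Sum>y\<in>outer_ovals Ovs up. d (Ov y)) = 0"
    by (rule sum.neutral) (use ov in \<open>auto simp: outer_ovals_def\<close>)
  then have dU1: "d U1 = 0" using h L_ROut[of d] dR by simp
  then have "d U2 = 0" "d U3 = 0" using u2 u3 by auto
  then show ?thesis using dU1 dR reg ov z by (cases v) (auto, metis G_RO(1), metis G_RO(2))
qed

lemma L_diff: "L (\<lambda>v. c v - c' v) w = L c w - L c' w"
  unfolding L_def by (simp add: sum_subtractf[symmetric] left_diff_distrib)

lemma sol_unique: assumes "sol c" shows "c = c0"
proof
  fix v
  have "(\<lambda>v. c v - c0 v) v = 0"
    by (rule hom_zero) (use assms sol_c0 in \<open>auto simp: sol_def L_diff\<close>)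
  then show "c v = c0 v" by simp
qed

lemma cvec: "c_vec Ovs up eps = c0"
proof -
  have "c_vec Ovs up eps = (THE c. sol c)" unfolding c_vec_def sol_def L_def ..
  also have "\<dots> = c0" using sol_c0 sol_unique by blast
  finally show ?thesis .
qed

end

lemma sum_pm: fixes f :: "'a \<Rightarrow> int"
  assumes "finite S" "\<forall>z\<in>S. f z = 1 \<or> f z = -1" "e = 1 \<or> e = -1"
  shows "sum f S = e * (int (card {z\<in>S. f z = e}) - int (card {z\<in>S. f z \<noteq> e}))"
proof -
  have "sum f S = sum f ({z\<in>S. f z = e} \<union> {z\<in>S. f z \<noteq> e})"
    by (rule sum.cong) auto
  also have "\<dots> = sum f {z\<in>S. f z = e} + sum f {z\<in>S. f z \<noteq> e}"
    by (rule sum.union_disjoint) (use assms(1) in auto)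
  also have "sum f {z\<in>S. f z = e} = sum (\<lambda>_. e) {z\<in>S. f z = e}" by (rule sum.cong) auto
  also have "sum f {z\<in>S. f z \<noteq> e} = sum (\<lambda>_. -e) {z\<in>S. f z \<noteq> e}"
    by (rule sum.cong) (use assms(2,3) in auto)
  finally show ?thesis by (simp add: algebra_simps)
qed

lemma cong0_int: assumes "prime p" shows "rat_cong0 p (of_int n) \<longleftrightarrow> int p dvd n"
proof
  assume "rat_cong0 p (of_int n)"
  then obtain a b :: int where ab: "b \<noteq> 0" "\<not> int p dvd b" "int p dvd a" "of_int n = (of_int a / of_int b :: rat)"
    unfolding rat_cong0_def by blast
  then have "n * b = a" by (simp add: field_simps flip: of_int_mult of_int_eq_iff)
  then have "int p dvd n * b" using ab by simp
  moreover have "prime (int p)" using assms by simp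
  ultimately show "int p dvd n" using ab(2) prime_dvd_mult_iff by blast
next
  assume "int p dvd n"
  moreover have "\<not> int p dvd 1" using assms prime_gt_1_nat by fastforce
  ultimately show "rat_cong0 p (of_int n)" unfolding rat_cong0_def
    by (intro exI[of _ n] exI[of _ 1]) simp
qed

lemma dvd_2: assumes "prime p" "odd p" shows "\<not> int p dvd 2"
proof
  assume "int p dvd 2"
  then have "p dvd 2" by presburger
  then have "p \<le> 2" by (simp add: dvd_imp_le)
  then have "p = 2" using prime_ge_2_nat[OF assms(1)] by simp
  then show False using assms(2) by simp
qed

lemma dvd_mult2: assumes "prime p" "odd p" shows "int p dvd 2 * n \<longleftrightarrow> int p dvd n"
  using dvd_2[OF assms] prime_dvd_mult_iff[of "int p" 2 n] assms(1) by auto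

lemma dvd_mult4: assumes "prime p" "odd p" shows "int p dvd 4 * n \<longleftrightarrow> int p dvd n"
  using dvd_mult2[OF assms, of "2*n"] dvd_mult2[OF assms, of n] by simp


context scheme begin

lemma T_Lambda: "T = int (Lambda_plus Ovs eps) - int (Lambda_minus Ovs eps)"
proof -
  have "{z\<in>Ovs. eps z \<noteq> 1} = {z\<in>Ovs. eps z = -1}" using eps_pm by force
  then show ?thesis using sum_pm[OF fin, of eps 1] eps_pm
    by (simp add: T_def Lambda_plus_def Lambda_minus_def)
qed

lemma W_outer: assumes "y \<in> outer_ovals Ovs up"
  shows "W y = eps y * (1 + int (Pi_minus Ovs up eps y) - int (Pi_plus Ovs up eps y))"
proof -
  have yO: "y \<in> Ovs" "up y = None" using assms by (auto simp: outer_ovals_def)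
  define D where "D = {z\<in>Ovs. (z,y) \<in> R\<^sup>+}"
  have sD: "sub y = insert y D" "y \<notin> D" "finite D"
    using yO acyc fin by (auto simp: sub_def D_def rtrancl_eq_or_trancl)
  have nenc: "\<not> encloses Ovs up x y" for x
    using yO(2) unfolding encloses_def by (auto dest!: tranclD simp: R_iff)
  have ip: "injective_pair Ovs up y x \<longleftrightarrow> x \<in> D" for x
    using yO nenc by (auto simp: injective_pair_def D_def encloses_def)
  have P1: "Pi_plus Ovs up eps y = card {z\<in>D. eps z \<noteq> eps y}"
    unfolding Pi_plus_def ip by (rule arg_cong[where f=card]) (auto simp: D_def)
  have P2: "Pi_minus Ovs up eps y = card {z\<in>D. eps z = eps y}"
    unfolding Pi_minus_def ip by (rule arg_cong[where f=card]) (auto simp: D_def)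
  have "W y = eps y + sum eps D" unfolding W_def sD(1) using sD by simp
  also have "sum eps D = eps y * (int (card {z\<in>D. eps z = eps y}) - int (card {z\<in>D. eps z \<noteq> eps y}))"
    by (rule sum_pm) (use sD(3) eps_pm yO in \<open>auto simp: D_def\<close>)
  finally show ?thesis using P1 P2 by (simp add: algebra_simps)
qed

lemma PN_U1: "{U1,w} \<in> Gplus_edges Ovs up \<longleftrightarrow> w = U2 \<or> w = U3 \<or> w = ROut"
  unfolding Gplus_edges_def Un_iff edge_iff image_iff
  by (auto simp: doubleton_eq_iff outside_region_def split: option.splits)
lemma PN_U2: "{U2,w} \<in> Gplus_edges Ovs up \<longleftrightarrow> w = U1"
  unfolding Gplus_edges_def Un_iff edge_iff image_iff
  by (auto simp: doubleton_eq_iff outside_region_def split: option.splits)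
lemma PN_U3: "{U3,w} \<in> Gplus_edges Ovs up \<longleftrightarrow> w = U1"
  unfolding Gplus_edges_def Un_iff edge_iff image_iff
  by (auto simp: doubleton_eq_iff outside_region_def split: option.splits)
lemma PN_ROut: "{ROut,w} \<in> Gplus_edges Ovs up \<longleftrightarrow> w = U1 \<or> (\<exists>x\<in>outer_ovals Ovs up. w = Ov x)"
  unfolding Gplus_edges_def Un_iff edge_iff image_iff
  by (auto simp: doubleton_eq_iff outside_region_def outer_ovals_def split: option.splits)
lemma PN_Ov: "x \<in> Ovs \<Longrightarrow> {Ov x, Head x} \<in> Gplus_edges Ovs up"
  unfolding Gplus_edges_def by auto

end


locale schemep = scheme + fixes p :: nat assumes pp: "prime p" and po: "odd p"
begin

abbreviation "Z \<equiv> Z_verts p Ovs up eps"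

lemma cplus: "c_plus Ovs up eps w = (case w of Head x \<Rightarrow> of_int (2 * arrow_sign Ovs up eps x) | _ \<Rightarrow> c0 w)"
  by (cases w) (simp_all add: c_plus_def cvec)

lemma cg_U1: "rat_cong0 p (c0 U1) \<longleftrightarrow> int p dvd T"
proof - have "c0 U1 = of_int (4*T)" by (simp add: c0_def)
  then show ?thesis by (simp only: cong0_int[OF pp] dvd_mult4[OF pp po]) qed
lemma cg_U2: "rat_cong0 p (c0 U2) \<longleftrightarrow> int p dvd T"
proof - have "c0 U2 = of_int (2*(-T))" by (simp add: c0_def)
  then show ?thesis by (simp only: cong0_int[OF pp] dvd_mult2[OF pp po] dvd_minus_iff) qed
lemma cg_U3: "rat_cong0 p (c0 U3) \<longleftrightarrow> int p dvd T"
proof - have "c0 U3 = of_int (2*(-T))" by (simp add: c0_def)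
  then show ?thesis by (simp only: cong0_int[OF pp] dvd_mult2[OF pp po] dvd_minus_iff) qed
lemma cg_ROut: "rat_cong0 p (c0 ROut)"
proof - have "c0 ROut = of_int 0" by (simp add: c0_def)
  then show ?thesis by (simp only: cong0_int[OF pp] dvd_0_right) qed
lemma cg_outer: assumes "y \<in> outer_ovals Ovs up"
  shows "rat_cong0 p (c0 (Ov y)) \<longleftrightarrow> [int (Pi_plus Ovs up eps y) - int (Pi_minus Ovs up eps y) = 1] (mod int p)"
proof -
  have yO: "y \<in> Ovs" "up y = None" using assms by (auto simp: outer_ovals_def)
  let ?k = "1 + int (Pi_minus Ovs up eps y) - int (Pi_plus Ovs up eps y)"
  have "c0 (Ov y) = of_int (4*(-(W y)))" using yO by (simp add: c0_def depth_outer A_outer)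
  then have "rat_cong0 p (c0 (Ov y)) \<longleftrightarrow> int p dvd W y"
    by (simp only: cong0_int[OF pp] dvd_mult4[OF pp po] dvd_minus_iff)
  also have "\<dots> \<longleftrightarrow> int p dvd ?k"
  proof -
    have "W y = ?k \<or> W y = - ?k" using W_outer[OF assms] eps_pm[OF yO(1)] by auto
    then show ?thesis by (metis dvd_minus_iff)
  qed
  also have "\<dots> \<longleftrightarrow> int p dvd (int (Pi_plus Ovs up eps y) - int (Pi_minus Ovs up eps y) - 1)"
    by (subst dvd_minus_iff[symmetric]) (simp add: algebra_simps)
  finally show ?thesis by (simp add: cong_iff_dvd_diff)
qed

lemma Ov_notZ: "Ov x \<notin> Z"
proof
  assume h: "Ov x \<in> Z"
  then have xO: "x \<in> Ovs" by (simp add: Z_verts_def)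
  let ?a = "arrow_sign Ovs up eps x"
  have "rat_cong0 p (c_plus Ovs up eps (Head x))" using h PN_Ov[OF xO] by (auto simp: Z_verts_def)
  then have "int p dvd 2 * ?a" by (simp only: cplus vtx.case cong0_int[OF pp])
  then have "int p dvd ?a" using dvd_mult2[OF pp po] by blast
  moreover have "\<bar>?a\<bar> = 1" using eps_pm[OF xO] by (auto simp: arrow_sign_def abs_mult power_abs)
  ultimately have "int p dvd 1" by (metis dvd_abs_iff)
  then show False using pp prime_gt_1_nat by fastforce
qed

lemma Z_U1: "U1 \<in> Z \<longleftrightarrow> int p dvd T"
  by (auto simp: Z_verts_def PN_U1 cplus cvec cg_U1 cg_U2 cg_U3 cg_ROut)
lemma Z_U2: "U2 \<in> Z \<longleftrightarrow> int p dvd T"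
  by (auto simp: Z_verts_def PN_U2 cplus cvec cg_U1 cg_U2)
lemma Z_U3: "U3 \<in> Z \<longleftrightarrow> int p dvd T"
  by (auto simp: Z_verts_def PN_U3 cplus cvec cg_U1 cg_U3)
lemma Z_ROut: "ROut \<in> Z \<longleftrightarrow> int p dvd T \<and>
   (\<forall>x\<in>outer_ovals Ovs up. [int (Pi_plus Ovs up eps x) - int (Pi_minus Ovs up eps x) = 1] (mod int p))"
  by (auto simp: Z_verts_def PN_ROut cplus cvec cg_U1 cg_ROut cg_outer)

lemma Z_sub: "Z \<subseteq> {U1, U2, U3, ROut} \<union> Reg ` Ovs"
proof
  fix v assume h: "v \<in> Z"
  then have "v \<in> Gverts Ovs" by (simp add: Z_verts_def)
  then show "v \<in> {U1, U2, U3, ROut} \<union> Reg ` Ovs" using h Ov_notZ by (auto simp: Gverts_def)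
qed

lemma ZE: "Z_edges p Ovs up eps = {e \<in> {{U1, U2}, {U1, U3}, {U1, ROut}}. e \<subseteq> Z}"
  unfolding Z_edges_def Gedges_def using Ov_notZ by auto

end


theorem proposition1p9:
  fixes Ovs :: "'x set" and up :: "'x \<Rightarrow> 'x option" and eps :: "'x \<Rightarrow> int" and p :: nat
  assumes "even_scheme Ovs up eps" and "prime p" and "odd p"
  shows "(\<not> [Lambda_minus Ovs eps = Lambda_plus Ovs eps] (mod p) \<longrightarrow>
            Z_edges p Ovs up eps = {} \<and> Z_verts p Ovs up eps \<subseteq> Reg ` Ovs)
       \<and> ([Lambda_minus Ovs eps = Lambda_plus Ovs eps] (mod p) \<longrightarrow>
            {U1, U2, U3} \<subseteq> Z_verts p Ovs up eps
          \<and> {{U1, U2}, {U1, U3}} \<subseteq> Z_edges p Ovs up eps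
          \<and> ((ROut \<in> Z_verts p Ovs up eps \<and> {U1, ROut} \<in> Z_edges p Ovs up eps) \<longleftrightarrow>
               (\<forall>x\<in>outer_ovals Ovs up.
                  [int (Pi_plus Ovs up eps x) - int (Pi_minus Ovs up eps x) = 1] (mod int p)))
          \<and> Z_edges p Ovs up eps \<subseteq> {{U1, U2}, {U1, U3}, {U1, ROut}}
          \<and> Z_verts p Ovs up eps \<subseteq> {U1, U2, U3, ROut} \<union> Reg ` Ovs)"
  proof -
  interpret schemep Ovs up eps p using assms by (unfold_locales) auto
  have cg: "[Lambda_minus Ovs eps = Lambda_plus Ovs eps] (mod p) \<longleftrightarrow> int p dvd T"
  proof -
    have "[Lambda_minus Ovs eps = Lambda_plus Ovs eps] (mod p) \<longleftrightarrow>
          int p dvd (int (Lambda_minus Ovs eps) - int (Lambda_plus Ovs eps))"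
      by (simp add: cong_int_iff[symmetric] cong_iff_dvd_diff)
    also have "\<dots> \<longleftrightarrow> int p dvd T" unfolding T_Lambda
      by (subst dvd_minus_iff[symmetric]) simp
    finally show ?thesis .
  qed
  show ?thesis
    unfolding cg ZE using Z_sub Z_U1 Z_U2 Z_U3 Z_ROut by auto
qed

end
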